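(* Let $\phi$ be an orientation-preserving isometry of a spin, closed, hyperbolic $2$-manifold $M=\Gamma\backslash H^2$, and let $\hat\phi$ be a lift of $\phi$ to a symmetry of a spin structure $\hat\Gamma\backslash\mathrm{SU}(1,1;\mathbb C)$ on $M$. Let $f\in\mathrm{SO}^+(2,1)$ with $\phi=f_\star$, and let $\hat f\in\mathrm{SU}(1,1;\mathbb C)$ be the lift of $f$ with $\hat\phi=\hat f_\star$. Let $P$ be an isolated fixed point of $\phi$, and let $x\in H^2$ with $\Gamma x=P$. Let $g\in\mathrm{SO}^+(2,1)$ with $ge_3=x$, and let $\hat g\in\mathrm{SU}(1,1;\mathbb C)$ be a lift of $g$. Let $\gamma$ be the unique element of $\Gamma$ such that $\gamma fx=x$, and let $\hat\gamma$ be the unique element of $\hat\Gamma$ lifting $\gamma$. Then $\hat g^{-1}\hat\gamma\hat f\hat g=\mathrm{diag}(u,\overline u)$ with $u$ a unit complex number, and $$\nu(\hat\phi,P)=\frac{1}{2\,\mathrm{Im}(u)\mathbf i}.$$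
   Context: $\mathrm{SU}(1,1;\mathbb C)=\{A\in\mathbb C(2):A^*JA=J,\ \det A=1\}$, $J=\mathrm{diag}(1,-1)$, acts on $B^2=\{z\in\mathbb C:|z|<1\}$ by $\begin{pmatrix}a&b\\c&d\end{pmatrix}\cdot z=(az+b)(cz+d)^{-1}$. Let $H^2=\{x\in\mathbb R^3:x_1^2+x_2^2-x_3^2=-1,\ x_3>0\}$ and $\zeta:B^2\to H^2$, $\zeta(z)=(2z/(1-|z|^2),(1+|z|^2)/(1-|z|^2))$ (identifying $z_1+z_2\mathbf i$ with $(z_1,z_2)$). The double covering epimorphism $\eta:\mathrm{SU}(1,1;\mathbb C)\to\mathrm{SO}^+(2,1)$ (representing $\mathrm{Spin}^+(2,1)$) is characterized by $\zeta(A\cdot z)=\eta(A)\zeta(z)$. $\Gamma\subset\mathrm{SO}^+(2,1)$ is discrete and torsion-free with $M$ closed, and $\hat\Gamma\subset\mathrm{SU}(1,1;\mathbb C)$ maps isomorphically onto $\Gamma$. Isometries $f_\star(\Gamma x)=\Gamma fx$ ($f$ normalizing $\Gamma$), symmetries $\hat f_\star(\hat\Gamma\hat h)=\hat\Gamma\hat f\hat h$ ($\hat f$ normalizing $\hat\Gamma$). $\mathrm{Spin}(2)=\eta^{-1}(\mathrm{Stab}(e_3))=\{\mathrm{diag}(u,\overline u):|u|=1\}$ with half-spin representations (Atiyah–Bott convention) $\Delta_2^+(\mathrm{diag}(u,\overline u))=\overline u$, $\Delta_2^-(\mathrm{diag}(u,\overline u))=u$. If $\hat\phi=\hat f_\star$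 and $P=\Gamma ge_3$ with $\hat g$ a lift of $g$, there is a unique $s\in\mathrm{Spin}(2)$ with $\hat\Gamma\hat f\hat g=\hat\Gamma\hat gs$, and the local contribution of the isolated fixed point $P$ to the Atiyah–Singer $G$-spin formula is $\nu(\hat\phi,P)=\dfrac{\mathrm{tr}\,\Delta_2^+(s)-\mathrm{tr}\,\Delta_2^-(s)}{|\det(I-d\phi_P)|}$. *)

theory Defs
  imports "HOL-Analysis.Analysis"
begin

definition Jm :: "real^3^3" where
  "Jm = (\<chi> i j. if i = j then (if i = 3 then -1 else 1) else 0)"

definition e1 :: "real^3" where "e1 = axis 1 1"
definition e2 :: "real^3" where "e2 = axis 2 1"
definition e3 :: "real^3" where "e3 = axis 3 1"

definition SO21p :: "(real^3^3) set" where
  "SO21p = {A. transpose A ** Jm ** A = Jm \<and> det A = 1 \<and> A $ 3 $ 3 > 0}"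

definition H2 :: "(real^3) set" where
  "H2 = {x. (x$1)^2 + (x$2)^2 - (x$3)^2 = -1 \<and> x$3 > 0}"

definition Jc :: "complex^2^2" where
  "Jc = (\<chi> i j. if i = j then (if i = 2 then -1 else 1) else 0)"

definition ctrans :: "complex^2^2 \<Rightarrow> complex^2^2" where
  "ctrans A = (\<chi> i j. cnj (A $ j $ i))"

definition SU11 :: "(complex^2^2) set" where
  "SU11 = {A. ctrans A ** Jc ** A = Jc \<and> det A = 1}"

definition mobius :: "complex^2^2 \<Rightarrow> complex \<Rightarrow> complex" where
  "mobius A z = (A$1$1 * z + A$1$2) / (A$2$1 * z + A$2$2)"

definition zeta :: "complex \<Rightarrow> real^3" where
  "zeta z = vector [2 * Re z / (1 - (cmod z)^2), 2 * Im z / (1 - (cmod z)^2),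
                    (1 + (cmod z)^2) / (1 - (cmod z)^2)]"

definition eta :: "complex^2^2 \<Rightarrow> real^3^3" where
  "eta A = (THE R. R \<in> SO21p \<and> (\<forall>z. cmod z < 1 \<longrightarrow> zeta (mobius A z) = R *v zeta z))"

definition cdiag :: "complex \<Rightarrow> complex \<Rightarrow> complex^2^2" where
  "cdiag a b = (\<chi> i j. if i = j then (if i = 1 then a else b) else 0)"

definition Spin2 :: "(complex^2^2) set" where
  "Spin2 = {cdiag u (cnj u) | u. cmod u = 1}"

text \<open>Half-spin representations of Spin(2) (Atiyah--Bott convention); both are one-dimensional,
  so the trace is the value itself.\<close>
definition Delta_plus :: "complex^2^2 \<Rightarrow> complex" where "Delta_plus s = cnj (s $ 1 $ 1)"
definition Delta_minus :: "complex^2^2 \<Rightarrow> complex" where "Delta_minus s = s $ 1 $ 1"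

definition mat_pow :: "'a::semiring_1^'n^'n \<Rightarrow> nat \<Rightarrow> 'a^'n^'n" where
  "mat_pow A n = ((\<lambda>B. A ** B) ^^ n) (mat 1)"

definition matgroup :: "('a::semiring_1^'n^'n) set \<Rightarrow> ('a^'n^'n) set \<Rightarrow> bool" where
  "matgroup G S \<longleftrightarrow> G \<subseteq> S \<and> mat 1 \<in> G \<and> (\<forall>A\<in>G. \<forall>B\<in>G. A ** B \<in> G)
      \<and> (\<forall>A\<in>G. matrix_inv A \<in> G)"

text \<open>Gamma: discrete, torsion-free subgroup of SO+(2,1) with Gamma\H^2 compact (closed).
  Compactness of the quotient is expressed as: some compact subset of H^2 meets every orbit.\<close>
definition cocompact_torsionfree_lattice :: "(real^3^3) set \<Rightarrow> bool" where
  "cocompact_torsionfree_lattice \<Gamma> \<longleftrightarrow>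
     matgroup \<Gamma> SO21p
   \<and> (\<forall>A\<in>\<Gamma>. \<exists>e>0. \<forall>B\<in>\<Gamma>. dist B A < e \<longrightarrow> B = A)
   \<and> (\<forall>A\<in>\<Gamma>. \<forall>n>0. mat_pow A n = mat 1 \<longrightarrow> A = mat 1)
   \<and> (\<exists>K. compact K \<and> K \<subseteq> H2 \<and> (\<forall>y\<in>H2. \<exists>\<gamma>\<in>\<Gamma>. \<gamma> *v y \<in> K))"

definition normalizes :: "'a::semiring_1^'n^'n \<Rightarrow> ('a^'n^'n) set \<Rightarrow> bool" where
  "normalizes f G \<longleftrightarrow> (\<lambda>A. f ** A ** matrix_inv f) ` G = G"

definition lcoset :: "('a::semiring_1^'n^'n) set \<Rightarrow> 'a^'n^'n \<Rightarrow> ('a^'n^'n) set" where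
  "lcoset G A = (\<lambda>B. B ** A) ` G"

text \<open>P = Gamma (g e3).  Near P the isometry phi = f_star is represented on H^2 by the
  linear isometry L = gamma f, where gamma is the element of Gamma with gamma f x = x, x = g e3.
  Its differential at x is L restricted to T_x H^2 = span(g e1, g e2).  In the basis
  (g e1, g e2) this is the upper-left 2x2 block of g^-1 L g; we return det(I - d phi_P).\<close>
definition det_I_minus_dphi :: "(real^3^3) set \<Rightarrow> real^3^3 \<Rightarrow> real^3^3 \<Rightarrow> real" where
  "det_I_minus_dphi \<Gamma> f g =
     (let x = g *v e3;
          \<gamma> = (THE \<gamma>. \<gamma> \<in> \<Gamma> \<and> \<gamma> *v (f *v x) = x);
          A = matrix_inv g ** (\<gamma> ** f) ** g
      in (1 - A$1$1) * (1 - A$2$2) - A$1$2 * A$2$1)"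

definition spin_s :: "(complex^2^2) set \<Rightarrow> complex^2^2 \<Rightarrow> complex^2^2 \<Rightarrow> complex^2^2" where
  "spin_s \<Gamma>h fh gh = (THE s. s \<in> Spin2 \<and> lcoset \<Gamma>h (fh ** gh) = lcoset \<Gamma>h (gh ** s))"

definition nu :: "(real^3^3) set \<Rightarrow> (complex^2^2) set \<Rightarrow> real^3^3 \<Rightarrow> complex^2^2
                   \<Rightarrow> real^3^3 \<Rightarrow> complex^2^2 \<Rightarrow> complex" where
  "nu \<Gamma> \<Gamma>h f fh g gh =
     (let s = spin_s \<Gamma>h fh gh
      in (Delta_plus s - Delta_minus s) / complex_of_real \<bar>det_I_minus_dphi \<Gamma> f g\<bar>)"

end

theory Submission
  imports Defs
begin


definition mk :: "complex \<Rightarrow> complex \<Rightarrow> complex^2^2" where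
  "mk a b = (\<chi> i j. if i = 1 then (if j = 1 then a else b) else (if j = 1 then cnj b else cnj a))"

lemma mk_nth[simp]: "mk a b $ 1 $ 1 = a" "mk a b $ 1 $ 2 = b" "mk a b $ 2 $ 1 = cnj b" "mk a b $ 2 $ 2 = cnj a"
  by (simp_all add: mk_def)

lemma mk_mult: "mk a b ** mk c d = mk (a*c + b*cnj d) (a*d + b*cnj c)"
  by (simp add: vec_eq_iff forall_2 matrix_matrix_mult_def sum_2 mk_def mult.commute)

definition nrm :: "complex \<Rightarrow> complex \<Rightarrow> bool" where
  "nrm a b \<longleftrightarrow> Re a ^ 2 + Im a ^ 2 - Re b ^ 2 - Im b ^ 2 = 1"

lemma nrm_mult: "nrm a b \<Longrightarrow> nrm c d \<Longrightarrow> nrm (a*c + b*cnj d) (a*d + b*cnj c)"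
proof -
  assume h: "nrm a b" "nrm c d"
  have "Re (a*c + b*cnj d) ^ 2 + Im (a*c + b*cnj d) ^ 2 - Re (a*d + b*cnj c) ^ 2 - Im (a*d + b*cnj c) ^ 2
     = (Re a ^ 2 + Im a ^ 2 - Re b ^ 2 - Im b ^ 2) * (Re c ^ 2 + Im c ^ 2 - Re d ^ 2 - Im d ^ 2)"
    by (simp add: power2_eq_square algebra_simps)
  then show ?thesis using h by (simp add: nrm_def)
qed

lemma mk_one: "mk 1 0 = mat 1"
  by (simp add: vec_eq_iff forall_2 mk_def mat_def)

lemma mk_inv: "nrm a b \<Longrightarrow> mk a b ** mk (cnj a) (-b) = mat 1" "nrm a b \<Longrightarrow> mk (cnj a) (-b) ** mk a b = mat 1"
proof -
  assume h: "nrm a b"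
  have 1: "a * cnj a - b * cnj b = 1"
    using h by (simp add: nrm_def complex_eq_iff power2_eq_square)
  have 2: "cnj a * a - b * cnj b = 1"
    using h by (simp add: nrm_def complex_eq_iff power2_eq_square)
  show "mk a b ** mk (cnj a) (-b) = mat 1" unfolding mk_mult using 1
    by (simp add: mk_one[symmetric] mult.commute)
  show "mk (cnj a) (-b) ** mk a b = mat 1" unfolding mk_mult using 2
    by (simp add: mk_one[symmetric] mult.commute)
qed

lemma matrix_inv_eq: "(A::'a::comm_ring_1^'n^'n) ** B = mat 1 \<Longrightarrow> B ** A = mat 1 \<Longrightarrow> matrix_inv A = B"
  unfolding matrix_inv_def
  apply (rule some_equality)
   apply simp
  by (metis matrix_mul_assoc matrix_mul_lid matrix_mul_rid)

definition etaF :: "complex \<Rightarrow> complex \<Rightarrow> real^3^3" where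
  "etaF a b = vector [vector [Re (a*a+b*b), - Im (a*a-b*b), 2 * Re (a*b)],
                      vector [Im (a*a+b*b), Re (a*a-b*b), 2 * Im (a*b)],
                      vector [2 * Re (a * cnj b), - 2 * Im (a * cnj b), Re a ^ 2 + Im a ^ 2 + Re b ^ 2 + Im b ^ 2]]"

lemma etaF_mult: "etaF a b ** etaF c d = etaF (a*c + b*cnj d) (a*d + b*cnj c)"
  unfolding etaF_def
  by (simp add: vec_eq_iff forall_3 matrix_matrix_mult_def sum_3 power2_eq_square algebra_simps)

lemma etaF_one: "etaF 1 0 = mat 1"
  by (simp add: etaF_def vec_eq_iff forall_3 mat_def)



lemma SU11_mk: assumes "A \<in> SU11" shows "\<exists>a b. A = mk a b \<and> nrm a b"
proof -
  define a where "a = A$1$1"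
  define b where "b = A$1$2"
  define c where "c = A$2$1"
  define d where "d = A$2$2"
  have M: "ctrans A ** Jc ** A = Jc" and D: "det A = 1" using assms by (auto simp: SU11_def)
  have e11: "cnj a * a - cnj c * c = 1"
    using arg_cong[OF M, of "\<lambda>M. M$1$1"]
    by (simp add: matrix_matrix_mult_def sum_2 Jc_def ctrans_def a_def c_def)
  have e12: "cnj a * b - cnj c * d = 0"
    using arg_cong[OF M, of "\<lambda>M. M$1$2"]
    by (simp add: matrix_matrix_mult_def sum_2 Jc_def ctrans_def a_def b_def c_def d_def)
  have de: "a * d - b * c = 1" using D by (simp add: det_2 a_def b_def c_def d_def)
  have dd: "d = cnj a" using e11 e12 de by algebra
  have a0: "a \<noteq> 0"
  proof
    assume "a = 0"
    then have "- (cnj c * c) = 1" using e11 by simp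
    then have "- (Re c * Re c) - Im c * Im c = 1" by (simp add: complex_eq_iff)
    moreover have "0 \<le> Re c * Re c + Im c * Im c" by simp
    ultimately show False by linarith
  qed
  have "cnj a * (b - cnj c) = 0" using e12 dd by (simp add: algebra_simps)
  then have bc: "c = cnj b" using a0 by simp
  have "A = mk a b"
    by (simp add: vec_eq_iff forall_2 mk_def a_def b_def bc[unfolded c_def] dd[unfolded d_def])
  moreover have "nrm a b"
    using arg_cong[OF e11, of Re] bc by (simp add: nrm_def power2_eq_square algebra_simps)
  ultimately show ?thesis by blast
qed



lemma etaF_nth[simp]:
  "etaF a b $ 1 $ 1 = Re (a*a+b*b)" "etaF a b $ 1 $ 2 = - Im (a*a-b*b)" "etaF a b $ 1 $ 3 = 2 * Re (a*b)"
  "etaF a b $ 2 $ 1 = Im (a*a+b*b)" "etaF a b $ 2 $ 2 = Re (a*a-b*b)" "etaF a b $ 2 $ 3 = 2 * Im (a*b)"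
  "etaF a b $ 3 $ 1 = 2 * Re (a * cnj b)" "etaF a b $ 3 $ 2 = - 2 * Im (a * cnj b)"
  "etaF a b $ 3 $ 3 = Re a ^ 2 + Im a ^ 2 + Re b ^ 2 + Im b ^ 2"
  by (simp_all add: etaF_def)

lemma etaF_SO: assumes "nrm a b" shows "etaF a b \<in> SO21p"
proof -
  define n where "n = Re a ^ 2 + Im a ^ 2 - Re b ^ 2 - Im b ^ 2"
  have n1: "n = 1" using assms by (simp add: nrm_def n_def)
  have "transpose (etaF a b) ** Jm ** etaF a b = (\<chi> i j. n^2 * Jm$i$j)"
    by (simp add: vec_eq_iff forall_3 matrix_matrix_mult_def sum_3 Jm_def transpose_def n_def
        power2_eq_square algebra_simps)
  then have 1: "transpose (etaF a b) ** Jm ** etaF a b = Jm" using n1 by (simp add: vec_eq_iff)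
  have "det (etaF a b) = n^3"
    by (simp add: det_3 n_def power2_eq_square power3_eq_cube algebra_simps)
  then have 2: "det (etaF a b) = 1" using n1 by simp
  have "Re a ^ 2 + Im a ^ 2 \<ge> 1" using n1 n_def by (smt (verit) zero_le_power2)
  then have 3: "etaF a b $ 3 $ 3 > 0" by (simp add: add_pos_nonneg)
  show ?thesis using 1 2 3 by (simp add: SO21p_def)
qed



lemma zeta_nth[simp]:
  "zeta z $ 1 = 2 * Re z / (1 - (cmod z)^2)" "zeta z $ 2 = 2 * Im z / (1 - (cmod z)^2)"
  "zeta z $ 3 = (1 + (cmod z)^2) / (1 - (cmod z)^2)"
  by (simp_all add: zeta_def)

lemma mv3: "((R::real^3^3) *v v) $ i = R$i$1 * v$1 + R$i$2 * v$2 + R$i$3 * v$3"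
  by (simp add: matrix_vector_mult_def sum_3)

lemma etaF_rel: assumes "nrm a b" "cmod z < 1"
  shows "zeta (mobius (mk a b) z) = etaF a b *v zeta z"
proof -
  define N where "N = a*z + b"
  define Dn where "Dn = cnj b * z + cnj a"
  define t where "t = 1 - (cmod z)^2"
  have t0: "t > 0" using assms(2) unfolding t_def
    by (simp add: abs_square_less_1)
  have "(cmod Dn)^2 - (cmod N)^2 = (Re a ^ 2 + Im a ^ 2 - Re b ^ 2 - Im b ^ 2) * t"
    unfolding cmod_power2 t_def N_def Dn_def by (simp add: power2_eq_square algebra_simps)
  then have key: "(cmod Dn)^2 - (cmod N)^2 = t" using assms(1) by (simp add: nrm_def)
  then have S0: "(cmod Dn)^2 > 0" using t0 by (smt (verit) zero_le_power2)
  define w where "w = N / Dn"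
  have mw: "mobius (mk a b) z = w" by (simp add: mobius_def w_def N_def Dn_def)
  have cw: "(cmod w)^2 = (cmod N)^2 / (cmod Dn)^2" by (simp add: w_def norm_divide power_divide)
  have ow: "1 - (cmod w)^2 = t / (cmod Dn)^2" using cw key S0 by (simp add: field_simps)
  have wd: "w = N * cnj Dn / complex_of_real ((cmod Dn)^2)"
    using S0 by (simp add: w_def complex_norm_square[symmetric] field_simps)
  have Rw: "Re w = Re (N * cnj Dn) / (cmod Dn)^2" unfolding wd by (simp add: Re_divide_of_real)
  have Iw: "Im w = Im (N * cnj Dn) / (cmod Dn)^2" unfolding wd by (simp add: Im_divide_of_real)
  have c1: "zeta w $ 1 = 2 * Re (N * cnj Dn) / t" unfolding zeta_nth ow Rw using S0 t0 by (simp add: field_simps)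
  have c2: "zeta w $ 2 = 2 * Im (N * cnj Dn) / t" unfolding zeta_nth ow Iw using S0 t0 by (simp add: field_simps)
  have pw: "1 + (cmod w)^2 = ((cmod Dn)^2 + (cmod N)^2)/(cmod Dn)^2" using cw S0 by (simp add: field_simps)
  have c3: "zeta w $ 3 = ((cmod Dn)^2 + (cmod N)^2) / t" unfolding zeta_nth ow pw using S0 t0 by (simp add: field_simps)
  have p1: "2 * Re (N * cnj Dn) = etaF a b $1$1 * (2 * Re z) + etaF a b $1$2 * (2 * Im z) + etaF a b $1$3 * (1 + (cmod z)^2)"
    unfolding cmod_power2 N_def Dn_def by (simp add: power2_eq_square algebra_simps)
  have p2: "2 * Im (N * cnj Dn) = etaF a b $2$1 * (2 * Re z) + etaF a b $2$2 * (2 * Im z) + etaF a b $2$3 * (1 + (cmod z)^2)"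
    unfolding cmod_power2 N_def Dn_def by (simp add: power2_eq_square algebra_simps)
  have p3: "(cmod Dn)^2 + (cmod N)^2 = etaF a b $3$1 * (2 * Re z) + etaF a b $3$2 * (2 * Im z) + etaF a b $3$3 * (1 + (cmod z)^2)"
    unfolding cmod_power2 N_def Dn_def by (simp add: power2_eq_square algebra_simps)
  have zt: "1 - (cmod z)^2 = t" by (simp add: t_def)
  have q1: "zeta w $ 1 = (etaF a b *v zeta z) $ 1"
    apply (subst c1) apply (subst p1) apply (simp only: mv3 zeta_nth zt) using t0 by (simp add: field_simps)
  have q2: "zeta w $ 2 = (etaF a b *v zeta z) $ 2"
    apply (subst c2) apply (subst p2) apply (simp only: mv3 zeta_nth zt) using t0 by (simp add: field_simps)
  have q3: "zeta w $ 3 = (etaF a b *v zeta z) $ 3"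
    apply (subst c3) apply (subst p3) apply (simp only: mv3 zeta_nth zt) using t0 by (simp add: field_simps)
  show ?thesis unfolding mw using q1 q2 q3 by (simp add: vec_eq_iff forall_3)
qed



lemma rel_unique:
  assumes "\<forall>z. cmod z < 1 \<longrightarrow> zeta (mobius A z) = R *v zeta z"
      and "\<forall>z. cmod z < 1 \<longrightarrow> zeta (mobius A z) = R' *v zeta z"
  shows "R = R'"
proof -
  have h: "(R *v zeta z)$i = (R' *v zeta z)$i" if "cmod z < 1" for z i
    using assms that by metis
  have z0: "zeta 0 $ 1 = 0" "zeta 0 $ 2 = 0" "zeta 0 $ 3 = 1" by simp_all
  have z1: "zeta (1/2) $ 1 = 4/3" "zeta (1/2) $ 2 = 0" "zeta (1/2) $ 3 = 5/3" by (simp_all add: power2_eq_square)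
  have z2: "zeta (\<i>/2) $ 1 = 0" "zeta (\<i>/2) $ 2 = 4/3" "zeta (\<i>/2) $ 3 = 5/3" by (simp_all add: power2_eq_square norm_divide)
  have "R$i$j = R'$i$j" for i j
  proof -
    have a: "R$i$3 = R'$i$3" using h[of 0 i] by (simp add: mv3)
    have b: "4/3 * R$i$1 + 5/3 * R$i$3 = 4/3 * R'$i$1 + 5/3 * R'$i$3"
      using h[of "1/2" i] unfolding mv3 z1 by (simp add: algebra_simps)
    have c: "4/3 * R$i$2 + 5/3 * R$i$3 = 4/3 * R'$i$2 + 5/3 * R'$i$3"
      using h[of "\<i>/2" i] unfolding mv3 z2 by (simp add: algebra_simps norm_divide)
    have "R$i$1 = R'$i$1" "R$i$2 = R'$i$2" using a b c by linarith+
    then show ?thesis using a exhaust_3[of j] by auto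
  qed
  then show ?thesis by (simp add: vec_eq_iff)
qed

lemma eta_mk: assumes "nrm a b" shows "eta (mk a b) = etaF a b"
  unfolding eta_def
proof (rule the_equality)
  show "etaF a b \<in> SO21p \<and> (\<forall>z. cmod z < 1 \<longrightarrow> zeta (mobius (mk a b) z) = etaF a b *v zeta z)"
    using etaF_SO[OF assms] etaF_rel[OF assms] by blast
  fix R assume "R \<in> SO21p \<and> (\<forall>z. cmod z < 1 \<longrightarrow> zeta (mobius (mk a b) z) = R *v zeta z)"
  then show "R = etaF a b" using rel_unique etaF_rel[OF assms] by blast
qed



lemma nrm_cnj[simp]: "nrm (cnj a) (-b) = nrm a b" by (simp add: nrm_def)

lemma etaF_inv: assumes "nrm a b"
  shows "etaF a b ** etaF (cnj a) (-b) = mat 1" "etaF (cnj a) (-b) ** etaF a b = mat 1"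
proof -
  have 1: "a * cnj a - b * cnj b = 1"
    using assms by (simp add: nrm_def complex_eq_iff power2_eq_square)
  show "etaF a b ** etaF (cnj a) (-b) = mat 1" unfolding etaF_mult using 1
    by (simp add: etaF_one[symmetric] mult.commute)
  show "etaF (cnj a) (-b) ** etaF a b = mat 1" unfolding etaF_mult using 1
    by (simp add: etaF_one[symmetric] mult.commute)
qed

lemma e3_nth[simp]: "e3 $ 1 = 0" "e3 $ 2 = 0" "e3 $ 3 = 1"
  by (simp_all add: e3_def axis_def)

lemma fix_e3: assumes "nrm a b" "etaF a b *v e3 = e3" shows "b = 0" "cmod a = 1"
proof -
  have h1: "2 * Re (a*b) = 0" using arg_cong[OF assms(2), of "\<lambda>v. v$1"] by (simp add: mv3)
  have h2: "2 * Im (a*b) = 0" using arg_cong[OF assms(2), of "\<lambda>v. v$2"] by (simp add: mv3)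
  have "a * b = 0" using h1 h2 by (simp add: complex_eq_iff)
  moreover have "a \<noteq> 0"
  proof
    assume "a = 0"
    then have "- (Re b ^ 2) - Im b ^ 2 = 1" using assms(1) by (simp add: nrm_def)
    moreover have "Re b ^ 2 \<ge> 0" "Im b ^ 2 \<ge> 0" by simp_all
    ultimately show False by linarith
  qed
  ultimately show b: "b = 0" by simp
  have "Re a ^ 2 + Im a ^ 2 = 1" using assms(1) b by (simp add: nrm_def)
  then show "cmod a = 1" by (simp add: cmod_def)
qed

lemma diag_e3: "etaF v 0 *v e3 = e3" if "cmod v = 1"
proof -
  have "Re v ^ 2 + Im v ^ 2 = 1" using that by (simp add: cmod_power2[symmetric])
  then show ?thesis by (simp add: vec_eq_iff forall_3 mv3)
qed

lemma mk_diag: "mk v 0 = cdiag v (cnj v)"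
  by (simp add: vec_eq_iff forall_2 mk_def cdiag_def)

lemma etaF_tendsto: assumes "(X \<longlongrightarrow> L) F" shows "((\<lambda>k. etaF (X k) 0) \<longlongrightarrow> etaF L 0) F"
proof -
  have h: "((\<lambda>k. etaF (X k) 0 $ i $ j) \<longlongrightarrow> etaF L 0 $ i $ j) F" for i j
    using exhaust_3[of i] exhaust_3[of j]
    apply (elim disjE)
    apply (simp_all del: tendsto_vec_nth)
    by (auto intro!: tendsto_intros assms simp del: tendsto_vec_nth)
  have "((\<lambda>k. etaF (X k) 0 $ i) \<longlongrightarrow> etaF L 0 $ i) F" for i
    by (rule vec_tendstoI) (rule h)
  then show ?thesis by (rule vec_tendstoI)
qed

lemma mult_tendsto: "((A::'k \<Rightarrow> real^3^3) \<longlongrightarrow> A0) F \<Longrightarrow> ((\<lambda>k. B ** A k ** C) \<longlongrightarrow> B ** A0 ** C) F"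
  unfolding matrix_matrix_mult_def
  by (auto intro!: tendsto_intros)

lemma approx_one: assumes "cmod v = 1"
  shows "\<exists>m. (\<forall>k. m k > 0) \<and> ((\<lambda>k. v ^ m k) \<longlonglongrightarrow> 1)"
proof -
  have "\<forall>n. v ^ n \<in> sphere 0 1" using assms by (simp add: norm_power)
  then obtain l r where l: "l \<in> sphere 0 1" and r: "strict_mono r" and lim: "((\<lambda>n. v ^ n) \<circ> r) \<longlonglongrightarrow> l"
    using compact_sphere[of "0::complex" 1] unfolding compact_def by metis
  define m where "m k = r (Suc k) - r k" for k
  have mpos: "m k > 0" for k using r by (simp add: m_def strict_mono_def)
  have v0: "v \<noteq> 0" using assms by auto
  have eq: "v ^ m k = v ^ r (Suc k) / v ^ r k" for k
    using r v0 by (simp add: m_def power_diff strict_mono_less_eq)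
  have l0: "l \<noteq> 0" using l by auto
  have t1: "(\<lambda>k. v ^ r (Suc k)) \<longlonglongrightarrow> l" using LIMSEQ_Suc[OF lim] by (simp add: o_def)
  have t2: "(\<lambda>k. v ^ r k) \<longlonglongrightarrow> l" using lim by (simp add: o_def)
  have "(\<lambda>k. v ^ r (Suc k) / v ^ r k) \<longlonglongrightarrow> l / l" by (rule tendsto_divide[OF t1 t2 l0])
  then have "(\<lambda>k. v ^ m k) \<longlonglongrightarrow> 1" using l0 by (simp add: eq)
  then show ?thesis using mpos by blast
qed



lemma prod_ex: assumes "nrm a b" "nrm c d"
  shows "\<exists>p q. etaF a b ** etaF c d = etaF p q \<and> mk a b ** mk c d = mk p q \<and> nrm p q"
  using etaF_mult mk_mult nrm_mult[OF assms] by blast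

lemma matgroupD: assumes "matgroup G S"
  shows "G \<subseteq> S" "mat 1 \<in> G" "A \<in> G \<Longrightarrow> B \<in> G \<Longrightarrow> A ** B \<in> G" "A \<in> G \<Longrightarrow> matrix_inv A \<in> G"
  using assms by (auto simp: matgroup_def)

lemma stab_trivial:
  assumes Gamma: "cocompact_torsionfree_lattice \<Gamma>"
    and Gammah: "matgroup \<Gamma>h SU11" "bij_betw eta \<Gamma>h \<Gamma>"
    and ab: "nrm a b"
    and d: "\<delta> \<in> \<Gamma>" "\<delta> *v (etaF a b *v e3) = etaF a b *v e3"
  shows "\<delta> = mat 1"
proof -
  have G: "matgroup \<Gamma> SO21p" and disc: "\<forall>A\<in>\<Gamma>. \<exists>e>0. \<forall>B\<in>\<Gamma>. dist B A < e \<longrightarrow> B = A"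
    and tf: "\<forall>A\<in>\<Gamma>. \<forall>n>0. mat_pow A n = mat 1 \<longrightarrow> A = mat 1"
    using Gamma by (auto simp: cocompact_torsionfree_lattice_def)
  obtain Dh where Dh: "Dh \<in> \<Gamma>h" "eta Dh = \<delta>" using Gammah(2) d(1) unfolding bij_betw_def by auto
  have "Dh \<in> SU11" using matgroupD(1)[OF Gammah(1)] Dh(1) by auto
  then obtain r t where rt: "Dh = mk r t" "nrm r t" using SU11_mk by blast
  have de: "\<delta> = etaF r t" using Dh(2) rt eta_mk by simp
  define ga where "ga = etaF a b"
  define gi where "gi = etaF (cnj a) (-b)"
  have gg: "ga ** gi = mat 1" "gi ** ga = mat 1" using etaF_inv[OF ab] by (simp_all add: ga_def gi_def)
  obtain p q where pq: "gi ** \<delta> = etaF p q" "nrm p q"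
    using prod_ex[of "cnj a" "-b" r t] ab rt(2) de gi_def by auto
  obtain v w where vw: "gi ** \<delta> ** ga = etaF v w" "nrm v w"
    using prod_ex[of p q a b] ab pq ga_def by auto
  have "etaF v w *v e3 = gi *v (\<delta> *v (ga *v e3))"
    by (simp add: vw(1)[symmetric] matrix_vector_mul_assoc matrix_mul_assoc)
  also have "\<dots> = e3" using d(2) gg by (simp add: ga_def matrix_vector_mul_assoc)
  finally have "etaF v w *v e3 = e3" .
  then have w0: "w = 0" and v1: "cmod v = 1" using fix_e3 vw(2) by auto
  have "\<delta> = (ga ** gi) ** \<delta> ** (ga ** gi)" using gg by simp
  also have "\<dots> = ga ** (gi ** \<delta> ** ga) ** gi" by (simp add: matrix_mul_assoc)
  finally have dd: "\<delta> = ga ** etaF v 0 ** gi" using vw(1) w0 by simp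
  have pw: "mat_pow \<delta> n = ga ** etaF (v^n) 0 ** gi" for n
  proof (induction n)
    case 0
    then show ?case using gg by (simp add: mat_pow_def etaF_one)
  next
    case (Suc n)
    have "mat_pow \<delta> (Suc n) = \<delta> ** mat_pow \<delta> n" by (simp add: mat_pow_def)
    also have "\<dots> = ga ** etaF v 0 ** (gi ** ga) ** etaF (v^n) 0 ** gi"
      using Suc dd by (simp add: matrix_mul_assoc)
    also have "\<dots> = ga ** (etaF v 0 ** etaF (v^n) 0) ** gi"
      using gg by (simp add: matrix_mul_assoc)
    also have "\<dots> = ga ** etaF (v^Suc n) 0 ** gi" by (simp add: etaF_mult)
    finally show ?case .
  qed
  have pin: "mat_pow \<delta> n \<in> \<Gamma>" for n
  proof (induction n)
    case 0
    then show ?case using matgroupD(2)[OF G] by (simp add: mat_pow_def)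
  next
    case (Suc n)
    then show ?case using matgroupD(3)[OF G d(1) Suc] by (simp add: mat_pow_def)
  qed
  obtain e where e: "e > 0" "\<forall>B\<in>\<Gamma>. dist B (mat 1) < e \<longrightarrow> B = mat 1"
    using disc matgroupD(2)[OF G] by blast
  obtain m where m: "\<forall>k. m k > 0" "(\<lambda>k. v ^ m k) \<longlonglongrightarrow> 1" using approx_one[OF v1] by blast
  have "(\<lambda>k. ga ** etaF (v ^ m k) 0 ** gi) \<longlonglongrightarrow> ga ** etaF 1 0 ** gi"
    by (rule mult_tendsto[OF etaF_tendsto[OF m(2)]])
  then have "(\<lambda>k. mat_pow \<delta> (m k)) \<longlonglongrightarrow> mat 1" using gg by (simp add: pw etaF_one)
  then have "\<forall>\<^sub>F k in sequentially. dist (mat_pow \<delta> (m k)) (mat 1) < e" using e(1) by (rule tendstoD)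
  then obtain N where "dist (mat_pow \<delta> (m N)) (mat 1) < e" unfolding eventually_sequentially by blast
  then have "mat_pow \<delta> (m N) = mat 1" using e(2) pin by blast
  then show ?thesis using tf d(1) m(1) by blast
qed



definition EE :: "complex^2^2 \<Rightarrow> real^3^3" where "EE M = etaF (M$1$1) (M$1$2)"

lemma EE_mk[simp]: "EE (mk a b) = etaF a b" by (simp add: EE_def)

lemma EE_mult: "EE (mk a b ** mk c d) = EE (mk a b) ** EE (mk c d)"
  by (simp add: mk_mult etaF_mult)

lemma eta_SU: "M \<in> SU11 \<Longrightarrow> eta M = EE M"
  using SU11_mk eta_mk by fastforce

lemma coset_shift:
  assumes "matgroup G S" "c \<in> G" "matrix_inv c ** c = mat 1"
  shows "lcoset G (c ** M) = lcoset G M"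
proof -
  have "(\<lambda>B. B ** (c ** M)) ` G \<subseteq> (\<lambda>B. B ** M) ` G"
  proof
    fix X assume "X \<in> (\<lambda>B. B ** (c ** M)) ` G"
    then obtain B where "B \<in> G" "X = B ** (c ** M)" by blast
    then have "X = (B ** c) ** M" "B ** c \<in> G" using matgroupD(3)[OF assms(1)] assms(2)
      by (auto simp: matrix_mul_assoc)
    then show "X \<in> (\<lambda>B. B ** M) ` G" by blast
  qed
  moreover have "(\<lambda>B. B ** M) ` G \<subseteq> (\<lambda>B. B ** (c ** M)) ` G"
  proof
    fix X assume "X \<in> (\<lambda>B. B ** M) ` G"
    then obtain B where "B \<in> G" "X = B ** M" by blast
    then have "X = (B ** matrix_inv c) ** (c ** M)" using assms(3)
      by (metis matrix_mul_assoc matrix_mul_rid)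
    moreover have "B ** matrix_inv c \<in> G"
      using matgroupD(3,4)[OF assms(1)] assms(2) \<open>B \<in> G\<close> by blast
    ultimately show "X \<in> (\<lambda>B. B ** (c ** M)) ` G" by blast
  qed
  ultimately show ?thesis unfolding lcoset_def by blast
qed

theorem theorem10p1:
  fixes \<Gamma> :: "(real^3^3) set" and \<Gamma>h :: "(complex^2^2) set"
    and f g \<gamma> :: "real^3^3" and fh gh \<gamma>h :: "complex^2^2" and x :: "real^3"
  assumes Gamma: "cocompact_torsionfree_lattice \<Gamma>"
    and Gammah: "matgroup \<Gamma>h SU11" "bij_betw eta \<Gamma>h \<Gamma>"
    and f: "f \<in> SO21p" "normalizes f \<Gamma>"
    and fh: "fh \<in> SU11" "eta fh = f" "normalizes fh \<Gamma>h"
    and x: "x \<in> H2"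
    and fixed: "\<exists>\<delta>\<in>\<Gamma>. \<delta> *v (f *v x) = x"
    and isolated: "\<exists>e>0. \<forall>y\<in>H2. dist y x < e \<and> (\<exists>\<delta>\<in>\<Gamma>. \<delta> *v (f *v y) = y)
                        \<longrightarrow> (\<exists>\<delta>\<in>\<Gamma>. \<delta> *v y = x)"
    and g: "g \<in> SO21p" "g *v e3 = x"
    and gh: "gh \<in> SU11" "eta gh = g"
    and \<gamma>: "\<gamma> \<in> \<Gamma>" "\<gamma> *v (f *v x) = x"
    and \<gamma>h: "\<gamma>h \<in> \<Gamma>h" "eta \<gamma>h = \<gamma>"
  shows "\<exists>u. cmod u = 1 \<and> matrix_inv gh ** \<gamma>h ** fh ** gh = cdiag u (cnj u)
            \<and> nu \<Gamma> \<Gamma>h f fh g gh = 1 / (2 * complex_of_real (Im u) * \<i>)"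
proof -
  have G: "matgroup \<Gamma> SO21p" using Gamma by (simp add: cocompact_torsionfree_lattice_def)
  obtain a b where ab: "gh = mk a b" "nrm a b" using SU11_mk gh(1) by blast
  have gE: "g = etaF a b" using gh(2) ab eta_mk by simp
  obtain c d where cd: "fh = mk c d" "nrm c d" using SU11_mk fh(1) by blast
  have fE: "f = etaF c d" using fh(2) cd eta_mk by simp
  have \<gamma>hS: "\<gamma>h \<in> SU11" using matgroupD(1)[OF Gammah(1)] \<gamma>h(1) by auto
  obtain p q where pq: "\<gamma>h = mk p q" "nrm p q" using SU11_mk \<gamma>hS by blast
  have \<gamma>E: "\<gamma> = etaF p q" using \<gamma>h(2) pq eta_mk by simp
  define ghi where "ghi = mk (cnj a) (-b)"
  define gi where "gi = etaF (cnj a) (-b)"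
  have ghinv: "matrix_inv gh = ghi" using mk_inv[OF ab(2)] ab(1) ghi_def matrix_inv_eq by metis
  have ghi1: "gh ** ghi = mat 1" "ghi ** gh = mat 1" using mk_inv[OF ab(2)] ab(1) ghi_def by auto
  have gi1: "g ** gi = mat 1" "gi ** g = mat 1" using etaF_inv[OF ab(2)] gE gi_def by auto
  have ginv: "matrix_inv g = gi" using gi1 matrix_inv_eq by metis
  have \<gamma>hinv: "matrix_inv \<gamma>h ** \<gamma>h = mat 1"
    using mk_inv[OF pq(2)] pq(1) matrix_inv_eq by metis
  have \<gamma>inv1: "matrix_inv \<gamma> ** \<gamma> = mat 1"
    using etaF_inv[OF pq(2)] \<gamma>E matrix_inv_eq by metis
  define s where "s = matrix_inv gh ** \<gamma>h ** fh ** gh"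
  obtain p1 q1 where 1: "etaF (cnj a) (-b) ** etaF p q = etaF p1 q1" "mk (cnj a) (-b) ** mk p q = mk p1 q1" "nrm p1 q1"
    using prod_ex[of "cnj a" "-b" p q] ab(2) pq(2) by auto
  obtain p2 q2 where 2: "etaF p1 q1 ** etaF c d = etaF p2 q2" "mk p1 q1 ** mk c d = mk p2 q2" "nrm p2 q2"
    using prod_ex[of p1 q1 c d] 1(3) cd(2) by auto
  obtain u w where 3: "etaF p2 q2 ** etaF a b = etaF u w" "mk p2 q2 ** mk a b = mk u w" "nrm u w"
    using prod_ex[of p2 q2 a b] 2(3) ab(2) by auto
  have sE: "s = mk u w" unfolding s_def ghinv ghi_def using 1 2 3 pq(1) cd(1) ab(1) by simp
  have sR: "gi ** \<gamma> ** f ** g = etaF u w" unfolding gi_def using 1 2 3 \<gamma>E fE gE by simp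
  have "etaF u w *v e3 = gi *v (\<gamma> *v (f *v (g *v e3)))"
    by (simp add: sR[symmetric] matrix_vector_mul_assoc matrix_mul_assoc)
  also have "\<dots> = e3"
  proof -
    have "gi *v x = e3" using g(2) gi1 by (metis matrix_vector_mul_assoc matrix_vector_mul_lid)
    then show ?thesis using \<gamma>(2) g(2) by simp
  qed
  finally have "etaF u w *v e3 = e3" .
  then have w0: "w = 0" and u1: "cmod u = 1" using fix_e3 3(3) by auto
  have sD: "s = cdiag u (cnj u)" using sE w0 mk_diag by simp
  have nrmu: "nrm u 0" using u1 by (simp add: nrm_def cmod_power2[symmetric])
  have stab: "\<delta> = mat 1" if "\<delta> \<in> \<Gamma>" "\<delta> *v x = x" for \<delta>
    using stab_trivial[OF Gamma Gammah ab(2) that(1)] that(2) g(2) gE by simp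
  have ghs: "gh ** s = \<gamma>h ** fh ** gh"
  proof -
    have "gh ** s = (gh ** ghi) ** \<gamma>h ** fh ** gh" unfolding s_def ghinv by (simp add: matrix_mul_assoc)
    then show ?thesis using ghi1 by simp
  qed
  have spin: "spin_s \<Gamma>h fh gh = s"
    unfolding spin_s_def
  proof (rule the_equality)
    have "lcoset \<Gamma>h (gh ** s) = lcoset \<Gamma>h (\<gamma>h ** (fh ** gh))" using ghs by (simp add: matrix_mul_assoc)
    also have "\<dots> = lcoset \<Gamma>h (fh ** gh)" using coset_shift[OF Gammah(1) \<gamma>h(1) \<gamma>hinv] by simp
    finally show "s \<in> Spin2 \<and> lcoset \<Gamma>h (fh ** gh) = lcoset \<Gamma>h (gh ** s)"
      using sD u1 by (auto simp: Spin2_def)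
  next
    fix s' assume s': "s' \<in> Spin2 \<and> lcoset \<Gamma>h (fh ** gh) = lcoset \<Gamma>h (gh ** s')"
    then obtain v where v: "cmod v = 1" "s' = cdiag v (cnj v)" by (auto simp: Spin2_def)
    have s'm: "s' = mk v 0" using v mk_diag by simp
    have "fh ** gh \<in> lcoset \<Gamma>h (fh ** gh)"
      using matgroupD(2)[OF Gammah(1)] unfolding lcoset_def by force
    then obtain B where B: "B \<in> \<Gamma>h" "fh ** gh = B ** (gh ** s')" using s' unfolding lcoset_def by auto
    define D where "D = \<gamma>h ** B"
    have D: "D \<in> \<Gamma>h" using matgroupD(3)[OF Gammah(1) \<gamma>h(1) B(1)] D_def by simp
    have DS: "D \<in> SU11" using matgroupD(1)[OF Gammah(1)] D by auto
    obtain r t where rt: "D = mk r t" "nrm r t" using SU11_mk DS by blast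
    have eq: "D ** gh ** s' = gh ** s" unfolding ghs D_def using B(2) by (metis matrix_mul_assoc)
    have "EE (D ** gh ** s') = EE (gh ** s)" using eq by simp
    then have "etaF r t ** g ** etaF v 0 = g ** etaF u 0"
      unfolding rt(1) ab(1) s'm sE w0 gE by (simp add: mk_mult etaF_mult)
    then have "etaF r t *v (g *v (etaF v 0 *v e3)) = g *v (etaF u 0 *v e3)"
      by (simp add: matrix_vector_mul_assoc matrix_mul_assoc)
    then have fx: "etaF r t *v x = x" using diag_e3[OF v(1)] diag_e3[OF u1] g(2) by simp
    have "eta D \<in> \<Gamma>" using Gammah(2) D unfolding bij_betw_def by auto
    moreover have "eta D = etaF r t" using rt eta_mk by simp
    ultimately have "eta D = mat 1" using stab fx by simp
    moreover have "eta (mat 1) = mat 1" using eta_mk[of 1 0] mk_one etaF_one by (simp add: nrm_def)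
    moreover have "mat 1 \<in> \<Gamma>h" using matgroupD(2)[OF Gammah(1)] .
    ultimately have "D = mat 1" using Gammah(2) D unfolding bij_betw_def inj_on_def by metis
    then have "gh ** s' = gh ** s" using eq by simp
    then have "(ghi ** gh) ** s' = (ghi ** gh) ** s" by (metis matrix_mul_assoc)
    then show "s' = s" using ghi1 by simp
  qed
  have theg: "(THE \<gamma>'. \<gamma>' \<in> \<Gamma> \<and> \<gamma>' *v (f *v (g *v e3)) = g *v e3) = \<gamma>"
  proof (rule the_equality)
    show "\<gamma> \<in> \<Gamma> \<and> \<gamma> *v (f *v (g *v e3)) = g *v e3" using \<gamma> g(2) by simp
  next
    fix \<gamma>' assume h: "\<gamma>' \<in> \<Gamma> \<and> \<gamma>' *v (f *v (g *v e3)) = g *v e3"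
    define \<delta> where "\<delta> = \<gamma>' ** matrix_inv \<gamma>"
    have "\<delta> \<in> \<Gamma>" unfolding \<delta>_def using matgroupD(3,4)[OF G] h \<gamma>(1) by blast
    moreover have "matrix_inv \<gamma> *v x = f *v x"
    proof -
      have "matrix_inv \<gamma> *v x = matrix_inv \<gamma> *v (\<gamma> *v (f *v x))" using \<gamma>(2) by simp
      also have "\<dots> = f *v x" using \<gamma>inv1 by (metis matrix_vector_mul_assoc matrix_vector_mul_lid)
      finally show ?thesis .
    qed
    then have "\<delta> *v x = x" unfolding \<delta>_def using h g(2) by (simp add: matrix_vector_mul_assoc[symmetric])
    ultimately have "\<delta> = mat 1" using stab by blast
    then have "\<gamma>' ** (matrix_inv \<gamma> ** \<gamma>) = \<gamma>" unfolding \<delta>_def by (simp add: matrix_mul_assoc)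
    then show "\<gamma>' = \<gamma>" using \<gamma>inv1 by simp
  qed
  have Aeq: "matrix_inv g ** (\<gamma> ** f) ** g = etaF u 0"
    using sR w0 ginv by (simp add: matrix_mul_assoc)
  have uu: "Re u ^ 2 + Im u ^ 2 = 1" using u1 by (simp add: cmod_power2[symmetric])
  have det: "det_I_minus_dphi \<Gamma> f g = 4 * (Im u)^2"
    unfolding det_I_minus_dphi_def Let_def theg Aeq
    using uu apply (simp add: power2_eq_square algebra_simps) by algebra
  have dp: "Delta_plus s - Delta_minus s = - 2 * \<i> * complex_of_real (Im u)"
    unfolding sE w0 by (simp add: Delta_plus_def Delta_minus_def complex_eq_iff)
  have fin: "nu \<Gamma> \<Gamma>h f fh g gh = 1 / (2 * complex_of_real (Im u) * \<i>)"
  proof (cases "Im u = 0")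
    case True
    then show ?thesis unfolding nu_def Let_def spin dp det by simp
  next
    case False
    have ab4: "\<bar>4 * (Im u)^2\<bar> = 4 * (Im u)^2" by simp
    have y0: "complex_of_real (Im u) \<noteq> 0" using False by simp
    show ?thesis unfolding nu_def Let_def spin dp det ab4
      using y0 by (simp add: field_simps power2_eq_square)
  qed
  show ?thesis using u1 sD fin unfolding s_def by blast
qed

end
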